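(* Let $K\subseteq\mathbb{R}^n$ be a proper cone and $A\in\mathbb{R}^{n\times n}$ nonsingular. Let $A=U-V$ be a convergent $K$-regular splitting and let $U=F-G$ be a convergent $K$-weak regular splitting of type II such that $VF^{-1}G=GF^{-1}V$. Then the stationary two-stage iterative method is convergent for any initial vector $x_0$; that is, for every positive integer $s$, the iteration matrix $$T_{s}=(F^{-1}G)^{s}+\sum_{j=0}^{s-1}(F^{-1}G)^{j}F^{-1}V$$ satisfies $\rho(T_s)<1$, so that the iterates $x_{k+1}=T_s x_k + \sum_{j=0}^{s-1}(F^{-1}G)^jF^{-1}b$ converge to $A^{-1}b$ for every $x_0$ and every $b$.
   Context: A proper cone $K\subseteq\mathbb{R}^n$ is a closed, convex, pointed ($K\cap(-K)=\{0\}$), solid (nonempty interior) cone. For $M\in\mathbb{R}^{n\times n}$, $M\geq_K 0$ means $MK\subseteq K$, and $M\geq_K N$ means $M-N\geq_K 0$. A splitting $A=U-V$ (with $U$ nonsingular) is $K$-regular if $U^{-1}\geq_K 0$ and $V\geq_K 0$; it is a $K$-weak regular splitting of type I if $U^{-1}\geq_K0$ and $U^{-1}V\geq_K 0$, and of type II if $U^{-1}\geq_K 0$ and $VU^{-1}\geq_K 0$. A splitting $A=U-V$ is convergent if $\rho(U^{-1}V)<1$, where $\rho$ denotes spectral radius. The stationary two-stage iterative method for $Ax=b$ uses the outer splitting $A=U-V$ and inner splitting $U=F-G$ with a fixed number $s\ge 1$ of inner iterations. *)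

theory Defs
  imports "HOL-Analysis.Analysis"
begin

definition proper_cone :: "(real^'n) set \<Rightarrow> bool" where
  "proper_cone K \<longleftrightarrow> cone K \<and> convex K \<and> closed K \<and>
     K \<inter> uminus ` K = {0} \<and> interior K \<noteq> {}"

definition K_nonneg :: "(real^'n) set \<Rightarrow> real^'n^'n \<Rightarrow> bool" where
  "K_nonneg K M \<longleftrightarrow> (\<forall>x\<in>K. M *v x \<in> K)"

definition K_regular_splitting :: "(real^'n) set \<Rightarrow> real^'n^'n \<Rightarrow> real^'n^'n \<Rightarrow> real^'n^'n \<Rightarrow> bool" where
  "K_regular_splitting K A U V \<longleftrightarrow> A = U - V \<and> invertible U \<and>
     K_nonneg K (matrix_inv U) \<and> K_nonneg K V"

definition K_weak_regular_splitting_II :: "(real^'n) set \<Rightarrow> real^'n^'n \<Rightarrow> real^'n^'n \<Rightarrow> real^'n^'n \<Rightarrow> bool" where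
  "K_weak_regular_splitting_II K A U V \<longleftrightarrow> A = U - V \<and> invertible U \<and>
     K_nonneg K (matrix_inv U) \<and> K_nonneg K (V ** matrix_inv U)"

definition matpow :: "real^'n^'n \<Rightarrow> nat \<Rightarrow> real^'n^'n" where
  "matpow M k = ((\<lambda>X. M ** X) ^^ k) (mat 1)"

definition complexify :: "real^'n^'n \<Rightarrow> complex^'n^'n" where
  "complexify M = (\<chi> i j. complex_of_real (M $ i $ j))"

definition complex_eigenvalue :: "real^'n^'n \<Rightarrow> complex \<Rightarrow> bool" where
  "complex_eigenvalue M l \<longleftrightarrow> (\<exists>v. v \<noteq> 0 \<and> complexify M *v v = l *s v)"

definition spectral_radius :: "real^'n^'n \<Rightarrow> real" where
  "spectral_radius M = Max {cmod l | l. complex_eigenvalue M l}"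

definition convergent_splitting :: "real^'n^'n \<Rightarrow> real^'n^'n \<Rightarrow> bool" where
  "convergent_splitting U V \<longleftrightarrow> spectral_radius (matrix_inv U ** V) < 1"

definition two_stage_T :: "real^'n^'n \<Rightarrow> real^'n^'n \<Rightarrow> real^'n^'n \<Rightarrow> nat \<Rightarrow> real^'n^'n" where
  "two_stage_T F G V s = matpow (matrix_inv F ** G) s +
     (\<Sum>j<s. matpow (matrix_inv F ** G) j ** matrix_inv F ** V)"

definition two_stage_c :: "real^'n^'n \<Rightarrow> real^'n^'n \<Rightarrow> nat \<Rightarrow> real^'n \<Rightarrow> real^'n" where
  "two_stage_c F G s b = (\<Sum>j<s. (matpow (matrix_inv F ** G) j ** matrix_inv F) *v b)"

definition two_stage_iter :: "real^'n^'n \<Rightarrow> real^'n^'n \<Rightarrow> real^'n^'n \<Rightarrow> nat \<Rightarrow> real^'n \<Rightarrow> real^'n \<Rightarrow> nat \<Rightarrow> real^'n" where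
  "two_stage_iter F G V s b x0 k =
     ((\<lambda>x. two_stage_T F G V s *v x + two_stage_c F G s b) ^^ k) x0"

end

theory Submission imports Defs "Jordan_Normal_Form.Jordan_Normal_Form_Existence" begin

no_notation Matrix.vec_index (infixl \<open>$\<close> 100)

definition gpow :: "'a::comm_ring_1^'n^'n \<Rightarrow> nat \<Rightarrow> 'a^'n^'n" where
  "gpow M k = ((\<lambda>X. M ** X) ^^ k) (Finite_Cartesian_Product.mat 1)"

lemma gpow_0[simp]: "gpow M 0 = Finite_Cartesian_Product.mat 1" by (simp add: gpow_def)
lemma gpow_Suc: "gpow M (Suc k) = M ** gpow M k" by (simp add: gpow_def)
lemma gpow_Suc': "gpow M (Suc k) = gpow M k ** M"
  by (induction k) (simp_all add: gpow_Suc matrix_mul_assoc)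
lemma matpow_gpow: "matpow M k = gpow M k" by (simp add: matpow_def gpow_def)

definition ix :: "nat \<Rightarrow> 'n::finite" where
  "ix = (SOME f. bij_betw f {0..<CARD('n)} (UNIV::'n set))"

lemma ix_bij: "bij_betw (ix :: nat \<Rightarrow> 'n::finite) {0..<CARD('n)} UNIV"
proof -
  have "\<exists>f. bij_betw f {0..<CARD('n)} (UNIV::'n set)"
    using ex_bij_betw_nat_finite[of "UNIV::'n set"] by simp
  then show ?thesis unfolding ix_def by (rule someI_ex)
qed

definition to_jm :: "'a::comm_ring_1^'n^'n \<Rightarrow> 'a mat" where
  "to_jm M = Matrix.mat CARD('n) CARD('n) (\<lambda>(i,j). vec_nth (vec_nth M (ix i)) (ix j))"

definition to_jv :: "'a::comm_ring_1^'n \<Rightarrow> 'a Matrix.vec" where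
  "to_jv v = Matrix.vec CARD('n) (\<lambda>i. vec_nth v (ix i))"

lemma to_jm_carrier: "to_jm (M::'a::comm_ring_1^'n^'n) \<in> carrier_mat CARD('n) CARD('n)"
  by (simp add: to_jm_def)

lemma to_jv_carrier: "to_jv (v::'a::comm_ring_1^'n) \<in> carrier_vec CARD('n)"
  by (simp add: to_jv_def)

lemma sum_ix: "(\<Sum>k\<in>{0..<CARD('n)}. g (ix k :: 'n::finite)) = (\<Sum>l\<in>UNIV. g l)"
  using sum.reindex_bij_betw[OF ix_bij, of g] by simp

lemma dim_to_jm[simp]: "dim_row (to_jm (M::'a::comm_ring_1^'n^'n)) = CARD('n)"
  "dim_col (to_jm (M::'a::comm_ring_1^'n^'n)) = CARD('n)"
  by (simp_all add: to_jm_def)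

lemma dim_to_jv[simp]: "dim_vec (to_jv (v::'a::comm_ring_1^'n)) = CARD('n)"
  by (simp add: to_jv_def)

lemma to_jm_mult: "to_jm (A ** B) = to_jm A * to_jm (B::'a::comm_ring_1^'n^'n)"
proof (rule eq_matI)
  fix i j assume "i < dim_row (to_jm A * to_jm B)" "j < dim_col (to_jm A * to_jm B)"
  then have ij: "i < CARD('n)" "j < CARD('n)" by auto
  have "(\<Sum>k = 0..<CARD('n). vec_nth (vec_nth A (ix i)) (ix k) * vec_nth (vec_nth B (ix k)) (ix j))
     = (\<Sum>l\<in>UNIV. vec_nth (vec_nth A (ix i)) l * vec_nth (vec_nth B l) (ix j))"
    by (rule sum_ix[of "\<lambda>l. vec_nth (vec_nth A (ix i)) l * vec_nth (vec_nth B l) (ix j)"])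
  then show "to_jm (A ** B) $$ (i, j) = (to_jm A * to_jm B) $$ (i, j)"
    using ij by (simp add: to_jm_def matrix_matrix_mult_def scalar_prod_def)
qed auto

lemma to_jm_one: "to_jm (Finite_Cartesian_Product.mat 1 :: 'a::comm_ring_1^'n^'n) = 1\<^sub>m CARD('n)"
proof -
  have inj: "inj_on (ix :: nat \<Rightarrow> 'n) {0..<CARD('n)}" using ix_bij[where 'n='n] unfolding bij_betw_def by (rule conjunct1)
  show ?thesis
  proof (rule eq_matI)
    fix i j assume "i < dim_row (1\<^sub>m CARD('n) :: 'a mat)" "j < dim_col (1\<^sub>m CARD('n) :: 'a mat)"
    then have ij: "i < CARD('n)" "j < CARD('n)" by auto
    have "(ix i = (ix j :: 'n)) = (i = j)" using inj_onD[OF inj, of i j] ij by auto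
    then show "to_jm (Finite_Cartesian_Product.mat 1 :: 'a::comm_ring_1^'n^'n) $$ (i, j) = 1\<^sub>m CARD('n) $$ (i, j)"
      using ij by (simp add: to_jm_def Finite_Cartesian_Product.mat_def)
  qed (simp_all)
qed

lemma to_jm_pow: "to_jm (gpow M k) = to_jm (M::'a::comm_ring_1^'n^'n) ^\<^sub>m k"
  by (induction k) (simp_all add: to_jm_one gpow_Suc' to_jm_mult)

lemma to_jm_mult_vec: "to_jm M *\<^sub>v to_jv v = to_jv (M *v (v::'a::comm_ring_1^'n))"
proof (rule eq_vecI)
  fix i assume "i < dim_vec (to_jv (M *v v))"
  then have i: "i < CARD('n)" by simp
  have "(\<Sum>k = 0..<CARD('n). vec_nth (vec_nth M (ix i)) (ix k) * vec_nth v (ix k))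
     = (\<Sum>l\<in>UNIV. vec_nth (vec_nth M (ix i)) l * vec_nth v l)"
    by (rule sum_ix[of "\<lambda>l. vec_nth (vec_nth M (ix i)) l * vec_nth v l"])
  then show "vec_index (to_jm M *\<^sub>v to_jv v) i = vec_index (to_jv (M *v v)) i"
    using i by (simp add: to_jm_def to_jv_def matrix_vector_mult_def scalar_prod_def)
next
  show "dim_vec (to_jm M *\<^sub>v to_jv v) = dim_vec (to_jv (M *v v))" by simp
qed

lemma to_jv_smult: "to_jv (l *s v) = l \<cdot>\<^sub>v to_jv (v::'a::comm_ring_1^'n)"
  by (rule eq_vecI) (simp_all add: to_jv_def)

lemma to_jv_eq_0: "to_jv v = 0\<^sub>v CARD('n) \<longleftrightarrow> v = (0::'a::comm_ring_1^'n)"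
proof
  assume h: "to_jv v = 0\<^sub>v CARD('n)"
  have "\<forall>l. vec_nth v l = vec_nth 0 l"
  proof
    fix l :: 'n
    have "l \<in> (ix :: nat \<Rightarrow> 'n) ` {0..<CARD('n)}"
      using bij_betw_imp_surj_on[OF ix_bij[where 'n='n]] by simp
    then obtain k where "k < CARD('n)" "ix k = l" by auto
    then show "vec_nth v l = vec_nth 0 l" using arg_cong[OF h, of "\<lambda>w. vec_index w k"]
      by (simp add: to_jv_def)
  qed
  then show "v = 0" unfolding Finite_Cartesian_Product.vec_eq_iff by simp
next
  assume "v = 0"
  then show "to_jv v = 0\<^sub>v CARD('n)" by (intro eq_vecI) (simp_all add: to_jv_def)
qed

lemma to_jv_diff: "to_jv (v - w) = to_jv v - to_jv (w::'a::comm_ring_1^'n)"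
  by (rule eq_vecI) (simp_all add: to_jv_def)

lemma to_jv_inj: "to_jv v = to_jv w \<Longrightarrow> v = (w::'a::comm_ring_1^'n)"
proof -
  assume "to_jv v = to_jv w"
  then have "to_jv (v - w) = to_jv w - to_jv w" by (simp add: to_jv_diff)
  also have "\<dots> = 0\<^sub>v CARD('n)" by (rule minus_cancel_vec[OF to_jv_carrier])
  finally have "to_jv (v - w) = 0\<^sub>v CARD('n)" .
  then show ?thesis using to_jv_eq_0[of "v - w"] by simp
qed

lemma to_jv_surj: assumes "w \<in> carrier_vec CARD('n)"
  shows "\<exists>v::'a::comm_ring_1^'n. to_jv v = w"
proof -
  let ?g = "inv_into {0..<CARD('n)} (ix :: nat \<Rightarrow> 'n)"
  have b: "bij_betw (ix :: nat \<Rightarrow> 'n) {0..<CARD('n)} UNIV" by (rule ix_bij)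
  have "to_jv (vec_lambda (\<lambda>l. vec_index w (?g l)) :: 'a^'n) = w"
    using assms b
    by (intro eq_vecI) (simp_all add: to_jv_def bij_betw_def inv_into_f_f)
  then show ?thesis by blast
qed

lemma eigenvalue_to_jm:
  "eigenvalue (to_jm M) l \<longleftrightarrow> (\<exists>v. v \<noteq> 0 \<and> M *v v = l *s (v::'a::field^'n))"
proof
  assume "eigenvalue (to_jm M) l"
  then obtain w where w: "w \<in> carrier_vec CARD('n)" "w \<noteq> 0\<^sub>v CARD('n)" "to_jm M *\<^sub>v w = l \<cdot>\<^sub>v w"
    unfolding eigenvalue_def eigenvector_def dim_to_jm by blast
  obtain v :: "'a^'n" where v: "to_jv v = w" using to_jv_surj[OF w(1)] by blast
  have "to_jv (M *v v) = to_jm M *\<^sub>v to_jv v" by (rule to_jm_mult_vec[symmetric])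
  also have "\<dots> = l \<cdot>\<^sub>v to_jv v" using w(3) v by simp
  also have "\<dots> = to_jv (l *s v)" by (rule to_jv_smult[symmetric])
  finally have "to_jv (M *v v) = to_jv (l *s v)" .
  then have "M *v v = l *s v"
    by (rule to_jv_inj)
  moreover have "v \<noteq> 0"
  proof
    assume "v = 0"
    then have "to_jv v = 0\<^sub>v CARD('n)" using to_jv_eq_0[of v] by simp
    then show False using v w(2) by simp
  qed
  ultimately show "\<exists>v. v \<noteq> 0 \<and> M *v v = l *s v" by blast
next
  assume "\<exists>v. v \<noteq> 0 \<and> M *v v = l *s (v::'a::field^'n)"
  then obtain v :: "'a^'n" where v: "v \<noteq> 0" "M *v v = l *s v" by blast
  have "eigenvector (to_jm M) (to_jv v) l"
    unfolding eigenvector_def dim_to_jm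
    using v to_jv_eq_0[of v] to_jv_carrier[of v] to_jm_mult_vec[of M v] to_jv_smult[of l v]
    by simp
  then show "eigenvalue (to_jm M) l" unfolding eigenvalue_def by blast
qed

abbreviation fmat :: "'a::zero \<Rightarrow> 'a^'n^'n" where "fmat \<equiv> Finite_Cartesian_Product.mat"

lemma test_dollar: "(x::real^'n) $ i = vec_nth x i" by simp

definition cvec :: "real^'n \<Rightarrow> complex^'n" where
  "cvec x = (\<chi> i. complex_of_real (x $ i))"

lemma complexify_mult: "complexify (A ** B) = complexify A ** complexify B"
  by (simp add: complexify_def matrix_matrix_mult_def Finite_Cartesian_Product.vec_eq_iff)

lemma complexify_one: "complexify (fmat 1) = fmat 1"
  by (simp add: complexify_def Finite_Cartesian_Product.mat_def Finite_Cartesian_Product.vec_eq_iff)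

lemma complexify_pow: "complexify (matpow M k) = gpow (complexify M) k"
  by (induction k) (simp_all add: matpow_gpow complexify_one gpow_Suc complexify_mult)

lemma complexify_mult_vec: "complexify M *v cvec x = cvec (M *v x)"
  by (simp add: complexify_def cvec_def matrix_vector_mult_def Finite_Cartesian_Product.vec_eq_iff)

lemma complexify_nth: "complexify M $ i $ j = complex_of_real (M $ i $ j)"
  by (simp add: complexify_def)

lemma complex_eigenvalue_jm: "complex_eigenvalue M l \<longleftrightarrow> eigenvalue (to_jm (complexify M)) l"
  unfolding complex_eigenvalue_def eigenvalue_to_jm ..

lemma ev_roots: "{l. complex_eigenvalue (M::real^'n^'n) l} = {l. poly (char_poly (to_jm (complexify M))) l = 0}"
  unfolding complex_eigenvalue_jm eigenvalue_root_char_poly[OF to_jm_carrier] ..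

lemma ev_finite: "finite {l. complex_eigenvalue (M::real^'n^'n) l}"
proof -
  have "coeff (char_poly (to_jm (complexify M))) CARD('n) = 1"
    using degree_monic_char_poly[OF to_jm_carrier[of "complexify M"]] by blast
  then have "char_poly (to_jm (complexify M)) \<noteq> 0" by auto
  then show ?thesis unfolding ev_roots by (rule poly_roots_finite)
qed

lemma ev_nonempty: "\<exists>l. complex_eigenvalue (M::real^'n^'n) l"
proof -
  have "degree (char_poly (to_jm (complexify M))) = CARD('n)"
    using degree_monic_char_poly[OF to_jm_carrier[of "complexify M"]] by blast
  then have "degree (char_poly (to_jm (complexify M))) > 0" by simp
  then have "\<not> constant (poly (char_poly (to_jm (complexify M))))" by (simp add: constant_degree)
  from fundamental_theorem_of_algebra[OF this] obtain z where "poly (char_poly (to_jm (complexify M))) z = 0" by blast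
  then show ?thesis using ev_roots[of M] by blast
qed

lemma sr_set: "{cmod l | l. complex_eigenvalue M l} = cmod ` {l. complex_eigenvalue M l}" by auto

lemma sr_ge: "complex_eigenvalue M l \<Longrightarrow> cmod l \<le> spectral_radius M"
  unfolding spectral_radius_def sr_set using ev_finite[of M] by (intro Max_ge) auto

lemma sr_attained: "\<exists>l. complex_eigenvalue (M::real^'n^'n) l \<and> cmod l = spectral_radius M"
proof -
  have "spectral_radius M \<in> cmod ` {l. complex_eigenvalue M l}"
    unfolding spectral_radius_def sr_set using ev_finite[of M] ev_nonempty[of M] by (intro Max_in) auto
  then show ?thesis by auto
qed

lemma sr_lt1: "(\<And>l. complex_eigenvalue (M::real^'n^'n) l \<Longrightarrow> cmod l < 1) \<Longrightarrow> spectral_radius M < 1"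
  using sr_attained[of M] by metis

lemma sr_nonneg: "spectral_radius (M::real^'n^'n) \<ge> 0"
  using sr_attained[of M] by (metis norm_ge_zero)

lemma ix_surj: "\<exists>a. a < CARD('n) \<and> ix a = (i::'n::finite)"
proof -
  have "i \<in> (ix :: nat \<Rightarrow> 'n) ` {0..<CARD('n)}"
    using bij_betw_imp_surj_on[OF ix_bij[where 'n='n]] by simp
  then show ?thesis by auto
qed

lemma jm_bounded_powers:
  fixes X :: "complex^'n^'n"
  assumes "\<And>l. eigenvalue (to_jm X) l \<Longrightarrow> cmod l < 1"
  shows "\<exists>c. \<forall>k i j. cmod (gpow X k $ i $ j) \<le> c"
proof -
  let ?J = "to_jm X"
  have J: "?J \<in> carrier_mat CARD('n) CARD('n)" by (rule to_jm_carrier)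
  from char_poly_factorized[OF J] obtain as where cA: "char_poly ?J = (\<Prod>a\<leftarrow>as. [:- a, 1:])" by auto
  have "\<exists>c1 c2. \<forall>k. norm_bound (?J ^\<^sub>m k) (c1 + c2 * of_nat k ^ (0 - 1))"
  proof (rule factored_char_poly_norm_bound[OF J cA jordan_nf_exists[OF J cA]])
    fix a assume "a \<in> set as"
    then have "poly (char_poly ?J) a = 0" unfolding cA by (rule linear_poly_root)
    then have "eigenvalue ?J a" using eigenvalue_root_char_poly[OF J] by simp
    then have lt: "norm a < 1" using assms by simp
    then show "norm a \<le> 1" by simp
    from lt show "norm a = 1 \<Longrightarrow> length (filter ((=) a) as) \<le> 0" by simp
  qed
  then obtain c1 c2 where nb: "\<And>k. norm_bound (?J ^\<^sub>m k) (c1 + c2)" by auto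
  show ?thesis
  proof (intro exI allI)
    fix k and i j :: 'n
    obtain a where a: "a < CARD('n)" "ix a = i" using ix_surj by blast
    obtain b where b: "b < CARD('n)" "ix b = j" using ix_surj by blast
    have "norm (to_jm (gpow X k) $$ (a, b)) \<le> c1 + c2"
      using nb[of k] a b unfolding to_jm_pow norm_bound_def by simp
    then show "cmod (gpow X k $ i $ j) \<le> c1 + c2"
      using a b by (simp add: to_jm_def)
  qed
qed

lemma scaleR_mat_vec: "((c::real) *\<^sub>R (A::complex^'n^'n)) *v v = complex_of_real c *s (A *v v)"
proof -
  have e: "((c *\<^sub>R A) $ i $ j) = complex_of_real c * A $ i $ j" for i j
    by (simp only: vector_scaleR_component) (simp add: scaleR_conv_of_real)
  show ?thesis
    by (simp add: matrix_vector_mult_def Finite_Cartesian_Product.vec_eq_iff e sum_distrib_left mult.assoc scaleR_conv_of_real[where 'a=complex])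
qed

lemma gpow_scaleR: "gpow ((c::real) *\<^sub>R (X::complex^'n^'n)) k = (c ^ k) *\<^sub>R gpow X k"
  by (induction k) (simp_all add: gpow_Suc scalar_matrix_assoc matrix_scalar_ac mult.commute)

lemma decay:
  fixes M :: "real^'n^'n"
  assumes "spectral_radius M < 1"
  shows "\<exists>c r. 0 < r \<and> r < 1 \<and> (\<forall>k i j. \<bar>matpow M k $ i $ j\<bar> \<le> c * r ^ k)"
proof -
  define \<rho> where "\<rho> = spectral_radius M"
  define r where "r = (\<rho> + 1) / 2"
  have r: "0 < r" "r < 1" "\<rho> < r" using sr_nonneg[of M] assms by (auto simp: r_def \<rho>_def)
  define X where "X = (1 / r) *\<^sub>R complexify M"
  have ev: "cmod l < 1" if evl: "eigenvalue (to_jm X) l" for l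
  proof -
    obtain v where v: "v \<noteq> 0" "X *v v = l *s v" using iffD1[OF eigenvalue_to_jm evl] by blast
    have "complexify M = r *\<^sub>R X" using r by (simp add: X_def)
    then have "complexify M *v v = (complex_of_real r * l) *s v"
      using v by (simp add: scaleR_mat_vec)
    then have "complex_eigenvalue M (complex_of_real r * l)"
      unfolding complex_eigenvalue_def using v by blast
    then have "cmod (complex_of_real r * l) \<le> \<rho>" unfolding \<rho>_def by (rule sr_ge)
    then have "r * cmod l \<le> \<rho>" using r by (simp add: norm_mult)
    then have "r * cmod l < r * 1" using r by linarith
    then show ?thesis using r by (simp only: mult_less_cancel_left_pos)
  qed
  obtain c where c: "\<And>k i j. cmod (gpow X k $ i $ j) \<le> c"
    using jm_bounded_powers[of X] ev by blast
  have "\<bar>matpow M k $ i $ j\<bar> \<le> c * r ^ k" for k i j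
  proof -
    have "gpow X k = ((1/r) ^ k) *\<^sub>R complexify (matpow M k)"
      unfolding X_def gpow_scaleR complexify_pow ..
    then have "cmod (gpow X k $ i $ j) = (1/r)^k * \<bar>matpow M k $ i $ j\<bar>"
      using r by (simp add: complexify_nth norm_mult)
    then have "(1/r)^k * \<bar>matpow M k $ i $ j\<bar> \<le> c" using c[of k i j] by simp
    then have "r^k * ((1/r)^k * \<bar>matpow M k $ i $ j\<bar>) \<le> r^k * c"
      using r by (intro mult_left_mono) auto
    moreover have "r^k * ((1/r)^k * \<bar>matpow M k $ i $ j\<bar>) = \<bar>matpow M k $ i $ j\<bar>"
      using r by (simp add: power_one_over field_simps)
    ultimately show ?thesis by (simp add: mult.commute)
  qed
  then show ?thesis using r by blast
qed

lemma pow_tendsto0: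
  fixes M :: "real^'n^'n"
  assumes "spectral_radius M < 1"
  shows "(\<lambda>k. matpow M k *v x) \<longlonglongrightarrow> 0"
proof -
  obtain c r where r: "0 < r" "r < 1" and c: "\<And>k i j. \<bar>matpow M k $ i $ j\<bar> \<le> c * r ^ k"
    using decay[OF assms] by blast
  show ?thesis
  proof (rule vec_tendstoI)
    fix i
    let ?C = "c * (\<Sum>j\<in>UNIV. \<bar>x $ j\<bar>)"
    have bound: "norm ((matpow M k *v x) $ i) \<le> r ^ k * ?C" for k
    proof -
      have "norm ((matpow M k *v x) $ i) = \<bar>\<Sum>j\<in>UNIV. matpow M k $ i $ j * x $ j\<bar>"
        by (simp add: matrix_vector_mult_def)
      also have "\<dots> \<le> (\<Sum>j\<in>UNIV. \<bar>matpow M k $ i $ j * x $ j\<bar>)" by (rule sum_abs)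
      also have "\<dots> \<le> (\<Sum>j\<in>UNIV. c * r ^ k * \<bar>x $ j\<bar>)"
        by (intro sum_mono) (simp add: abs_mult mult_right_mono c)
      also have "\<dots> = r ^ k * ?C" by (simp add: sum_distrib_left mult_ac)
      finally show ?thesis .
    qed
    have lim: "(\<lambda>k. r ^ k * ?C) \<longlonglongrightarrow> 0"
      using r by (intro tendsto_mult_left_zero LIMSEQ_power_zero) auto
    have ev: "\<forall>\<^sub>F k in sequentially. norm ((matpow M k *v x) $ i) \<le> r ^ k * ?C"
      by (rule always_eventually) (use bound in blast)
    have "(\<lambda>k. (matpow M k *v x) $ i) \<longlonglongrightarrow> 0"
      by (rule Lim_null_comparison[OF ev lim])
    then show "(\<lambda>k. (matpow M k *v x) $ i) \<longlonglongrightarrow> 0 $ i" by simp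
  qed
qed

lemma gpow_eigen: "X *v v = l *s v \<Longrightarrow> gpow X k *v v = (l ^ k) *s (v::complex^'n)"
  by (induction k) (simp_all add: gpow_Suc matrix_vector_mul_assoc[symmetric] vector_scalar_commute)

lemma tendsto0_sr:
  fixes M :: "real^'n^'n"
  assumes h: "\<And>x. (\<lambda>k. matpow M k *v x) \<longlonglongrightarrow> 0"
  shows "spectral_radius M < 1"
proof (rule sr_lt1)
  fix l assume "complex_eigenvalue M l"
  then obtain v where v: "v \<noteq> 0" "complexify M *v v = l *s v" unfolding complex_eigenvalue_def by blast
  obtain j where j: "v $ j \<noteq> 0" using v(1) unfolding Finite_Cartesian_Product.vec_eq_iff by auto
  have ent: "(\<lambda>k. matpow M k $ j $ m) \<longlonglongrightarrow> 0" for m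
  proof -
    have "(\<lambda>k. (matpow M k *v axis m 1) $ j) \<longlonglongrightarrow> 0 $ j"
      by (intro tendsto_vec_nth h)
    moreover have "(matpow M k *v axis m 1) $ j = matpow M k $ j $ m" for k
    proof -
      have "(matpow M k *v axis m 1) $ j = (\<Sum>i\<in>UNIV. if i = m then matpow M k $ j $ i else 0)"
        by (simp add: matrix_vector_mult_def axis_def if_distrib cong: if_cong)
      then show ?thesis by simp
    qed
    ultimately show ?thesis by simp
  qed
  have "(\<lambda>k. (gpow (complexify M) k *v v) $ j) \<longlonglongrightarrow> 0"
  proof -
    have "(gpow (complexify M) k *v v) $ j = (\<Sum>m\<in>UNIV. complex_of_real (matpow M k $ j $ m) * v $ m)" for k
      by (simp add: matrix_vector_mult_def complexify_pow[symmetric] complexify_nth)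
    moreover have "(\<lambda>k. \<Sum>m\<in>UNIV. complex_of_real (matpow M k $ j $ m) * v $ m) \<longlonglongrightarrow> (\<Sum>m\<in>(UNIV::'n set). 0)"
    proof (intro tendsto_sum tendsto_mult_left_zero)
      fix m
      show "(\<lambda>k. complex_of_real (matpow M k $ j $ m)) \<longlonglongrightarrow> 0"
        using tendsto_of_real[OF ent[of m], where 'a=complex] by simp
    qed
    ultimately show ?thesis by simp
  qed
  then have "(\<lambda>k. l ^ k * v $ j) \<longlonglongrightarrow> 0"
    using gpow_eigen[OF v(2)] by simp
  then have "(\<lambda>k. (l ^ k * v $ j) * inverse (v $ j)) \<longlonglongrightarrow> 0"
    by (rule tendsto_mult_left_zero)
  then have "(\<lambda>k. l ^ k) \<longlonglongrightarrow> 0" using j by simp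
  then have lim: "(\<lambda>k. cmod l ^ k) \<longlonglongrightarrow> 0" 
    using tendsto_norm_zero[of "\<lambda>k. l ^ k" sequentially] by (simp add: norm_power)
  show "cmod l < 1"
  proof (rule ccontr)
    assume "\<not> cmod l < 1"
    then have "\<forall>k. 1 \<le> cmod l ^ k" by (simp add: one_le_power)
    then have "1 \<le> (0::real)" by (intro LIMSEQ_le_const[OF lim]) blast
    then show False by simp
  qed
qed

section \<open>Matrix inverse and algebra\<close>

lemma matrix_inv_props:
  assumes "invertible (A::'a::semiring_1^'n^'n)"
  shows "A ** matrix_inv A = fmat 1" "matrix_inv A ** A = fmat 1"
proof -
  have "\<exists>A'. A ** A' = fmat 1 \<and> A' ** A = fmat 1" using assms unfolding invertible_def by blast
  then have "A ** matrix_inv A = fmat 1 \<and> matrix_inv A ** A = fmat 1"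
    unfolding matrix_inv_def by (rule someI_ex)
  then show "A ** matrix_inv A = fmat 1" "matrix_inv A ** A = fmat 1" by auto
qed

lemma matrix_add_rdistrib': "((A::'a::semiring_1^'n^'m) + B) ** C = A ** C + B ** C"
  by (simp add: matrix_matrix_mult_def Finite_Cartesian_Product.vec_eq_iff distrib_right sum.distrib)

lemma matrix_diff_rdistrib': "((A::'a::ring_1^'n^'m) - B) ** C = A ** C - B ** C"
  by (simp add: matrix_matrix_mult_def Finite_Cartesian_Product.vec_eq_iff left_diff_distrib sum_subtractf)

lemma matrix_diff_ldistrib': "(A::'a::ring_1^'n^'m) ** (B - C) = A ** B - A ** C"
  by (simp add: matrix_matrix_mult_def Finite_Cartesian_Product.vec_eq_iff right_diff_distrib sum_subtractf)

lemma matrix_sum_rmult: "(\<Sum>j\<in>S. f j) ** (C::'a::semiring_1^'p^'n) = (\<Sum>j\<in>S. f j ** C)"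
  by (induction S rule: infinite_finite_induct) (simp_all add: matrix_add_rdistrib')

lemma matrix_sum_lmult: "(C::'a::semiring_1^'n^'m) ** (\<Sum>j\<in>S. f j) = (\<Sum>j\<in>S. C ** f j)"
  by (induction S rule: infinite_finite_induct) (simp_all add: matrix_add_ldistrib)

lemma matrix_sum_vec: "(\<Sum>j\<in>S. f j) *v (x::'a::semiring_1^'n) = (\<Sum>j\<in>S. f j *v x)"
  by (induction S rule: infinite_finite_induct) (simp_all add: matrix_vector_mult_add_rdistrib)

lemma gpow_add: "gpow M (a + b) = gpow M a ** gpow M b"
  by (induction a) (simp_all add: gpow_Suc matrix_mul_assoc)

lemma gpow_mult: "gpow M (a * b) = gpow (gpow M a) b"
  by (induction b) (simp_all add: gpow_Suc gpow_add mult.commute)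

section \<open>Cones\<close>

lemma K_zero: assumes "proper_cone K" shows "0 \<in> K"
proof -
  from assms obtain e where "e \<in> interior K" unfolding proper_cone_def by blast
  then have "e \<in> K" using interior_subset by blast
  then have "0 *\<^sub>R e \<in> K" using assms unfolding proper_cone_def cone_def by blast
  then show ?thesis by simp
qed

lemma K_scale: assumes "proper_cone K" "x \<in> K" "0 \<le> c" shows "c *\<^sub>R x \<in> K"
  using assms unfolding proper_cone_def cone_def by blast

lemma K_add: assumes "proper_cone K" "x \<in> K" "y \<in> K" shows "x + y \<in> K"
proof -
  have cv: "convex K" using assms(1) unfolding proper_cone_def by blast
  have "(1/2) *\<^sub>R x + (1/2) *\<^sub>R y \<in> K"
    using convexD[OF cv assms(2,3), of "1/2" "1/2"] by simp
  then have "2 *\<^sub>R ((1/2) *\<^sub>R x + (1/2) *\<^sub>R y) \<in> K" using K_scale[OF assms(1)] by simp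
  then show ?thesis by (simp add: scaleR_add_right)
qed

lemma K_sum: assumes "proper_cone K" "\<And>j. j \<in> S \<Longrightarrow> f j \<in> K" shows "(\<Sum>j\<in>S. f j) \<in> K"
  using assms(2)
proof (induction S rule: infinite_finite_induct)
  case (infinite S) then show ?case using K_zero[OF assms(1)] by simp
next
  case empty then show ?case using K_zero[OF assms(1)] by simp
next
  case (insert x F) then show ?case using K_add[OF assms(1)] by simp
qed

lemma K_closed: "proper_cone K \<Longrightarrow> closed K" unfolding proper_cone_def by blast

lemma K_pointed: assumes "proper_cone K" "x \<in> K" "- x \<in> K" shows "x = 0"
proof -
  have "x \<in> uminus ` K" using assms(3) by (metis image_eqI minus_minus)
  then have "x \<in> K \<inter> uminus ` K" using assms(2) by blast
  then show ?thesis using assms(1) unfolding proper_cone_def by blast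
qed

lemma K_span: assumes "proper_cone K" shows "\<exists>x1 x2. x1 \<in> K \<and> x2 \<in> K \<and> y = x1 - x2"
proof -
  from assms obtain e where e: "e \<in> interior K" unfolding proper_cone_def by blast
  then obtain \<epsilon> where eps: "\<epsilon> > 0" "ball e \<epsilon> \<subseteq> K" using mem_interior by blast
  define t where "t = \<epsilon> / (norm y + 1)"
  have np: "norm y + 1 > 0" using norm_ge_zero[of y] by linarith
  have t: "t > 0" unfolding t_def by (rule divide_pos_pos[OF eps(1) np])
  have "norm (t *\<^sub>R y) < \<epsilon>"
  proof -
    have "norm (t *\<^sub>R y) = t * norm y" using t by simp
    also have "\<dots> < t * (norm y + 1)" using t by simp
    also have "\<dots> = \<epsilon>" using np by (simp add: t_def)
    finally show ?thesis .
  qed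
  then have "e + t *\<^sub>R y \<in> ball e \<epsilon>" by (simp add: dist_norm)
  then have a: "e + t *\<^sub>R y \<in> K" using eps by blast
  have b: "e \<in> K" using e interior_subset by blast
  have "(1/t) *\<^sub>R (e + t *\<^sub>R y) \<in> K" "(1/t) *\<^sub>R e \<in> K"
    using K_scale[OF assms a] K_scale[OF assms b] t by auto
  moreover have "y = (1/t) *\<^sub>R (e + t *\<^sub>R y) - (1/t) *\<^sub>R e"
    using t by (simp add: scaleR_add_right)
  ultimately show ?thesis by blast
qed

lemma K_functional:
  fixes K :: "(real^'n) set"
  assumes "proper_cone K"
  shows "\<exists>w \<delta>. \<delta> > 0 \<and> (\<forall>x\<in>K. \<delta> * norm x \<le> inner w x)"
proof -
  define T where "T = K \<inter> sphere 0 1"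
  have cT: "compact T" unfolding T_def using K_closed[OF assms] by (intro closed_Int_compact) auto
  define S where "S = convex hull T"
  have cS: "compact S" unfolding S_def by (rule compact_convex_hull[OF cT])
  have nz: "0 \<notin> S"
  proof
    assume "0 \<in> S"
    then obtain F u where F: "finite F" "F \<subseteq> T" "\<forall>x\<in>F. 0 \<le> u x" "sum u F = 1"
      "(\<Sum>v\<in>F. u v *\<^sub>R v) = 0"
      unfolding S_def convex_hull_explicit by blast
    have "\<exists>v0\<in>F. u v0 \<noteq> 0"
    proof (rule ccontr)
      assume "\<not> (\<exists>v0\<in>F. u v0 \<noteq> 0)"
      then have "sum u F = 0" by simp
      then show False using F(4) by simp
    qed
    then obtain v0 where v0: "v0 \<in> F" "u v0 \<noteq> 0" by blast
    have v0K: "v0 \<in> K" "norm v0 = 1" using v0(1) F(2) unfolding T_def by auto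
    have z: "u v0 *\<^sub>R v0 \<in> K" using K_scale[OF assms v0K(1)] F(3) v0(1) by blast
    have r: "(\<Sum>v\<in>F - {v0}. u v *\<^sub>R v) \<in> K"
      using F(2,3) unfolding T_def by (intro K_sum[OF assms] K_scale[OF assms]) auto
    have "(\<Sum>v\<in>F. u v *\<^sub>R v) = u v0 *\<^sub>R v0 + (\<Sum>v\<in>F - {v0}. u v *\<^sub>R v)"
      using F(1) v0(1) by (rule sum.remove)
    then have "- (u v0 *\<^sub>R v0) = (\<Sum>v\<in>F - {v0}. u v *\<^sub>R v)" using F(5)
      by (simp add: neg_eq_iff_add_eq_0)
    then have "- (u v0 *\<^sub>R v0) \<in> K" using r by simp
    then have "u v0 *\<^sub>R v0 = 0" using K_pointed[OF assms z] by blast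
    then show False using v0(2) v0K(2) by simp
  qed
  obtain a b where ab: "a \<noteq> 0" "0 < b" "\<forall>x\<in>S. inner a x > b"
    using separating_hyperplane_closed_0[OF convex_convex_hull[of T] compact_imp_closed[OF cS[unfolded S_def]]] nz
    unfolding S_def by blast
  have "b * norm x \<le> inner a x" if x: "x \<in> K" for x
  proof (cases "x = 0")
    case True then show ?thesis by simp
  next
    case False
    have "(1 / norm x) *\<^sub>R x \<in> T" unfolding T_def using K_scale[OF assms x] False by auto
    then have "(1 / norm x) *\<^sub>R x \<in> S" unfolding S_def by (rule hull_inc)
    then have "inner a ((1 / norm x) *\<^sub>R x) > b" using ab(3) by blast
    then have "inner a x / norm x > b" by (simp add: inner_scaleR_right)
    then show ?thesis using False by (simp add: pos_less_divide_eq mult.commute)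
  qed
  then show ?thesis using ab(2) by blast
qed

lemma K_nonneg_mult: "K_nonneg K A \<Longrightarrow> K_nonneg K B \<Longrightarrow> K_nonneg K (A ** B)"
  unfolding K_nonneg_def by (simp add: matrix_vector_mul_assoc[symmetric])

lemma K_nonneg_add: "proper_cone K \<Longrightarrow> K_nonneg K A \<Longrightarrow> K_nonneg K B \<Longrightarrow> K_nonneg K (A + B)"
  unfolding K_nonneg_def by (simp add: matrix_vector_mult_add_rdistrib K_add)

lemma K_nonneg_one: "K_nonneg K (fmat 1)"
  unfolding K_nonneg_def by simp

lemma K_nonneg_pow: "K_nonneg K A \<Longrightarrow> K_nonneg K (gpow A k)"
  by (induction k) (simp_all add: K_nonneg_one gpow_Suc K_nonneg_mult)

lemma K_nonneg_sum: assumes "proper_cone K" "\<And>j. j \<in> S \<Longrightarrow> K_nonneg K (f j)"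
  shows "K_nonneg K (\<Sum>j\<in>S. f j)"
  unfolding K_nonneg_def matrix_sum_vec using assms unfolding K_nonneg_def
  by (intro ballI K_sum) auto

section \<open>Weak regular splitting argument\<close>

lemma tendsto_matvec_zero: "(f \<longlongrightarrow> 0) F \<Longrightarrow> ((\<lambda>k. (W::real^'n^'m) *v f k) \<longlongrightarrow> 0) F"
proof -
  assume "(f \<longlongrightarrow> 0) F"
  moreover have "bounded_linear (\<lambda>x. W *v (x::real^'n))"
    using matrix_vector_mul_linear[of W] by (simp add: linear_conv_bounded_linear)
  ultimately show ?thesis by (rule bounded_linear.tendsto_zero[rotated])
qed

lemma wrs_main:
  fixes K :: "(real^'n) set" and A R :: "real^'n^'n"
  assumes K: "proper_cone K"
    and A: "invertible A" and Ai: "K_nonneg K (matrix_inv A)"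
    and R: "invertible R" and Rn: "K_nonneg K R"
    and B: "K_nonneg K (fmat 1 - A ** R)"
  shows "(\<lambda>k. gpow (fmat 1 - R ** A) k *v y) \<longlonglongrightarrow> 0"
proof -
  define Ai where "Ai = matrix_inv A"
  define Bm where "Bm = fmat 1 - A ** R"
  define C where "C = fmat 1 - R ** A"
  have AAi: "Ai ** A = fmat 1" "A ** Ai = fmat 1" using matrix_inv_props[OF A] by (auto simp: Ai_def)
  have RB: "R ** Bm = C ** R"
    by (simp add: Bm_def C_def matrix_diff_ldistrib' matrix_diff_rdistrib' matrix_mul_assoc)
  have RBk: "R ** gpow Bm k = gpow C k ** R" for k
  proof (induction k)
    case 0 then show ?case by simp
  next
    case (Suc k)
    have "R ** gpow Bm (Suc k) = (R ** gpow Bm k) ** Bm" by (simp add: gpow_Suc' matrix_mul_assoc)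
    also have "\<dots> = gpow C k ** (R ** Bm)" using Suc by (simp add: matrix_mul_assoc)
    also have "\<dots> = gpow C (Suc k) ** R" by (simp add: RB gpow_Suc' matrix_mul_assoc)
    finally show ?case .
  qed
  have Rform: "R = Ai - Ai ** Bm"
  proof -
    have "Ai ** Bm = Ai - (Ai ** A) ** R" by (simp add: Bm_def matrix_diff_ldistrib' matrix_mul_assoc)
    then show ?thesis using AAi by simp
  qed
  have sumid: "(\<Sum>k<m. R *v (gpow Bm k *v x)) = Ai *v x - Ai *v (gpow Bm m *v x)" for m x
  proof (induction m)
    case 0 then show ?case by simp
  next
    case (Suc m)
    have "R *v (gpow Bm m *v x) = Ai *v (gpow Bm m *v x) - Ai *v (gpow Bm (Suc m) *v x)"
      by (simp add: Rform matrix_vector_mult_diff_rdistrib gpow_Suc matrix_vector_mul_assoc[symmetric])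
    then show ?case using Suc by simp
  qed
  obtain w \<delta> where wd: "\<delta> > 0" "\<And>x. x \<in> K \<Longrightarrow> \<delta> * norm x \<le> inner w x"
    using K_functional[OF K] by blast
  have Bn: "K_nonneg K Bm" using B by (simp add: Bm_def)
  have Ain: "K_nonneg K Ai" using Ai by (simp add: Ai_def)
  have conv: "(\<lambda>k. gpow C k *v (R *v x)) \<longlonglongrightarrow> 0" if x: "x \<in> K" for x
  proof -
    define z where "z k = R *v (gpow Bm k *v x)" for k
    have zK: "z k \<in> K" for k
      using x Rn K_nonneg_pow[OF Bn, of k] unfolding z_def K_nonneg_def by blast
    have bnd: "(\<Sum>k<m. norm (z k)) \<le> inner w (Ai *v x) / \<delta>" for m
    proof -
      have "\<delta> * (\<Sum>k<m. norm (z k)) = (\<Sum>k<m. \<delta> * norm (z k))" by (simp add: sum_distrib_left)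
      also have "\<dots> \<le> (\<Sum>k<m. inner w (z k))" by (intro sum_mono wd(2) zK)
      also have "\<dots> = inner w (\<Sum>k<m. z k)" by (simp add: inner_sum_right)
      also have "\<dots> = inner w (Ai *v x) - inner w (Ai *v (gpow Bm m *v x))"
        unfolding z_def sumid by (simp add: inner_diff_right)
      also have "\<dots> \<le> inner w (Ai *v x)"
      proof -
        have "Ai *v (gpow Bm m *v x) \<in> K"
          using x Ain K_nonneg_pow[OF Bn, of m] unfolding K_nonneg_def by blast
        then have "\<delta> * norm (Ai *v (gpow Bm m *v x)) \<le> inner w (Ai *v (gpow Bm m *v x))" by (rule wd(2))
        moreover have "0 \<le> \<delta> * norm (Ai *v (gpow Bm m *v x))" using wd(1) by simp
        ultimately show ?thesis by linarith
      qed
      finally show ?thesis using wd(1) by (simp add: pos_le_divide_eq mult.commute)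
    qed
    have "summable (\<lambda>k. norm (z k))"
      by (rule summableI_nonneg_bounded[where x="inner w (Ai *v x) / \<delta>"]) (simp_all add: bnd)
    then have "(\<lambda>k. norm (z k)) \<longlonglongrightarrow> 0" by (rule summable_LIMSEQ_zero)
    then have "z \<longlonglongrightarrow> 0" by (rule tendsto_norm_zero_cancel)
    moreover have "z = (\<lambda>k. gpow C k *v (R *v x))"
      unfolding z_def by (rule ext) (simp add: matrix_vector_mul_assoc RBk)
    ultimately show ?thesis by simp
  qed
  define Ri where "Ri = matrix_inv R"
  have RRi: "R ** Ri = fmat 1" using matrix_inv_props[OF R] by (simp add: Ri_def)
  obtain x1 x2 where xs: "x1 \<in> K" "x2 \<in> K" "Ri *v y = x1 - x2" using K_span[OF K] by blast
  have yx: "y = R *v x1 - R *v x2"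
  proof -
    have "y = R *v (Ri *v y)" by (simp add: matrix_vector_mul_assoc RRi)
    then show ?thesis using xs(3) by (simp add: matrix_vector_mult_diff_distrib)
  qed
  have "(\<lambda>k. gpow C k *v (R *v x1) - gpow C k *v (R *v x2)) \<longlonglongrightarrow> 0 - 0"
    by (intro tendsto_diff conv xs)
  then show ?thesis unfolding C_def[symmetric] yx by (simp add: matrix_vector_mult_diff_distrib)
qed

lemma inv_nonneg:
  fixes K :: "(real^'n) set" and A U V :: "real^'n^'n"
  assumes K: "proper_cone K" and A: "invertible A" and split: "A = U - V" and U: "invertible U"
    and Ui: "K_nonneg K (matrix_inv U)" and Vn: "K_nonneg K V"
    and sr: "spectral_radius (matrix_inv U ** V) < 1"
  shows "K_nonneg K (matrix_inv A)"
  unfolding K_nonneg_def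
proof
  fix x assume x: "x \<in> K"
  define Ai where "Ai = matrix_inv A"
  define H where "H = matrix_inv U ** V"
  define W where "W = Ai ** U"
  define y where "y = matrix_inv U *v x"
  have AAi: "Ai ** A = fmat 1" using matrix_inv_props[OF A] by (simp add: Ai_def)
  have UUi: "U ** matrix_inv U = fmat 1" using matrix_inv_props[OF U] by simp
  have WH: "W ** (fmat 1 - H) = fmat 1"
  proof -
    have "W ** (fmat 1 - H) = Ai ** U - Ai ** ((U ** matrix_inv U) ** V)"
      by (simp add: W_def H_def matrix_diff_ldistrib' matrix_mul_assoc)
    also have "\<dots> = Ai ** (U - V)" by (simp add: UUi matrix_diff_ldistrib')
    finally show ?thesis using AAi split by simp
  qed
  have Hn: "K_nonneg K H" unfolding H_def by (rule K_nonneg_mult[OF Ui Vn])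
  have yK: "y \<in> K" using Ui x unfolding y_def K_nonneg_def by blast
  define S where "S m = (\<Sum>k<m. gpow H k *v y)" for m
  have tel: "(fmat 1 - H) *v S m = y - gpow H m *v y" for m
  proof (induction m)
    case 0 then show ?case by (simp add: S_def)
  next
    case (Suc m)
    have "S (Suc m) = S m + gpow H m *v y" by (simp add: S_def)
    then have "(fmat 1 - H) *v S (Suc m) = (y - gpow H m *v y) + (fmat 1 - H) *v (gpow H m *v y)"
      using Suc by (simp add: matrix_vector_right_distrib)
    also have "\<dots> = y - gpow H (Suc m) *v y"
    proof -
      have "(fmat 1 - H) *v (gpow H m *v y) = gpow H m *v y - H *v (gpow H m *v y)"
        by (simp add: matrix_vector_mult_diff_rdistrib)
      moreover have "gpow H (Suc m) *v y = H *v (gpow H m *v y)"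
        by (simp add: gpow_Suc matrix_vector_mul_assoc)
      ultimately show ?thesis by simp
    qed
    finally show ?case .
  qed
  have Sform: "S m = W *v y - W *v (gpow H m *v y)" for m
  proof -
    have "S m = W *v ((fmat 1 - H) *v S m)" by (simp add: matrix_vector_mul_assoc WH)
    then show ?thesis using tel[of m] by (simp add: matrix_vector_mult_diff_distrib)
  qed
  have "(\<lambda>m. gpow H m *v y) \<longlonglongrightarrow> 0"
    using pow_tendsto0[OF sr, of y] by (simp add: H_def matpow_gpow)
  then have "(\<lambda>m. W *v (gpow H m *v y)) \<longlonglongrightarrow> 0" by (rule tendsto_matvec_zero)
  then have "(\<lambda>m. W *v y - W *v (gpow H m *v y)) \<longlonglongrightarrow> W *v y - 0"
    by (intro tendsto_diff tendsto_const)
  moreover have "S = (\<lambda>m. W *v y - W *v (gpow H m *v y))" using Sform by (rule ext)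
  ultimately have lim: "S \<longlonglongrightarrow> W *v y" by simp
  have SK: "S m \<in> K" for m
    unfolding S_def using yK K_nonneg_pow[OF Hn] unfolding K_nonneg_def
    by (intro K_sum[OF K]) blast
  have "W *v y \<in> K"
    by (rule Lim_in_closed_set[OF K_closed[OF K] _ trivial_limit_sequentially lim]) (simp add: SK)
  moreover have "W *v y = Ai *v x"
    by (simp add: W_def y_def matrix_vector_mul_assoc matrix_mul_assoc[symmetric] UUi)
  ultimately show "matrix_inv A *v x \<in> K" by (simp add: Ai_def)
qed

lemma invertible_of_ker:
  fixes M :: "real^'n^'n"
  assumes "\<And>x. M *v x = 0 \<Longrightarrow> x = 0"
  shows "invertible M"
  using assms unfolding invertible_left_inverse matrix_left_invertible_ker by blast

lemma gpow_fix: "X *v x = x \<Longrightarrow> gpow X k *v x = (x::real^'n)"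
  by (induction k) (simp_all add: gpow_Suc matrix_vector_mul_assoc[symmetric])

theorem theorem3p3:
  fixes K :: "(real^'n) set" and A U V F G :: "real^'n^'n"
  assumes "proper_cone K"
    and "invertible A"
    and "K_regular_splitting K A U V" and "convergent_splitting U V"
    and "K_weak_regular_splitting_II K U F G" and "convergent_splitting F G"
    and "V ** matrix_inv F ** G = G ** matrix_inv F ** V"
  shows "\<forall>s\<ge>1. spectral_radius (two_stage_T F G V s) < 1 \<and>
           (\<forall>b x0. (\<lambda>k. two_stage_iter F G V s b x0 k) \<longlonglongrightarrow> matrix_inv A *v b)"
proof (intro allI impI)
  fix s :: nat assume s: "s \<ge> 1"
  note K = assms(1) and Ainv = assms(2)
  have AUV: "A = U - V" and Uinv: "invertible U" and Uin: "K_nonneg K (matrix_inv U)" and Vn: "K_nonneg K V"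
    using assms(3) unfolding K_regular_splitting_def by auto
  have UFG: "U = F - G" and Finv: "invertible F" and Fin: "K_nonneg K (matrix_inv F)"
    and Qn: "K_nonneg K (G ** matrix_inv F)"
    using assms(5) unfolding K_weak_regular_splitting_II_def by auto
  have sr1: "spectral_radius (matrix_inv U ** V) < 1" using assms(4) unfolding convergent_splitting_def .
  have sr2: "spectral_radius (matrix_inv F ** G) < 1" using assms(6) unfolding convergent_splitting_def .
  define Fi where "Fi = matrix_inv F"
  define P where "P = Fi ** G"
  define Q where "Q = G ** Fi"
  define R where "R = (\<Sum>j<s. gpow P j ** Fi)"
  define T where "T = two_stage_T F G V s"
  have FFi: "F ** Fi = fmat 1" "Fi ** F = fmat 1" using matrix_inv_props[OF Finv] by (auto simp: Fi_def)
  have PF: "gpow P j ** Fi = Fi ** gpow Q j" for j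
  proof (induction j)
    case 0 then show ?case by simp
  next
    case (Suc j)
    have "gpow P (Suc j) ** Fi = P ** (gpow P j ** Fi)" by (simp add: gpow_Suc matrix_mul_assoc)
    also have "\<dots> = Fi ** (Q ** gpow Q j)" using Suc by (simp add: P_def Q_def matrix_mul_assoc)
    also have "\<dots> = Fi ** gpow Q (Suc j)" by (simp add: gpow_Suc)
    finally show ?case .
  qed
  have R2: "R = (\<Sum>j<s. Fi ** gpow Q j)" unfolding R_def using PF by simp
  have RU: "R ** U = fmat 1 - gpow P s"
  proof -
    have trm: "gpow P j ** Fi ** U = gpow P j - gpow P (Suc j)" for j
    proof -
      have "gpow P j ** Fi ** U = gpow P j ** (Fi ** F - Fi ** G)"
        by (simp add: UFG matrix_diff_ldistrib' matrix_mul_assoc)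
      also have "\<dots> = gpow P j - gpow P j ** P" by (simp add: FFi P_def matrix_diff_ldistrib')
      also have "\<dots> = gpow P j - gpow P (Suc j)" by (simp add: gpow_Suc')
      finally show ?thesis .
    qed
    have "R ** U = (\<Sum>j<s. gpow P j - gpow P (Suc j))"
      unfolding R_def matrix_sum_rmult trm ..
    also have "\<dots> = fmat 1 - gpow P s" by (simp add: sum_lessThan_telescope')
    finally show ?thesis .
  qed
  have UR: "U ** R = fmat 1 - gpow Q s"
  proof -
    have trm: "U ** (Fi ** gpow Q j) = gpow Q j - gpow Q (Suc j)" for j
    proof -
      have "U ** (Fi ** gpow Q j) = (F ** Fi - G ** Fi) ** gpow Q j"
        by (simp add: UFG matrix_diff_rdistrib' matrix_mul_assoc)
      also have "\<dots> = gpow Q j - Q ** gpow Q j" by (simp add: FFi Q_def matrix_diff_rdistrib')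
      also have "\<dots> = gpow Q j - gpow Q (Suc j)" by (simp add: gpow_Suc)
      finally show ?thesis .
    qed
    have "U ** R = (\<Sum>j<s. gpow Q j - gpow Q (Suc j))"
      unfolding R2 matrix_sum_lmult trm ..
    also have "\<dots> = fmat 1 - gpow Q s" by (simp add: sum_lessThan_telescope')
    finally show ?thesis .
  qed
  have Teq: "T = gpow P s + R ** V"
    unfolding T_def two_stage_T_def R_def matrix_sum_rmult matpow_gpow P_def Fi_def ..
  have Ceq: "fmat 1 - R ** A = T"
  proof -
    have "R ** A = R ** U - R ** V" by (simp add: AUV matrix_diff_ldistrib')
    then show ?thesis by (simp add: Teq RU)
  qed
  have Beq: "fmat 1 - A ** R = gpow Q s + V ** R"
  proof -
    have "A ** R = U ** R - V ** R" by (simp add: AUV matrix_diff_rdistrib')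
    then show ?thesis by (simp add: UR)
  qed
  have Rn: "K_nonneg K R"
    unfolding R2 using Fin Qn
    by (intro K_nonneg_sum[OF K] K_nonneg_mult K_nonneg_pow) (simp_all add: Fi_def Q_def)
  have Bn: "K_nonneg K (fmat 1 - A ** R)"
    unfolding Beq using Qn Vn Rn
    by (intro K_nonneg_add[OF K] K_nonneg_mult K_nonneg_pow) (simp_all add: Fi_def Q_def)
  have M1inv: "invertible (fmat 1 - gpow P s)"
  proof (rule invertible_of_ker)
    fix x assume "(fmat 1 - gpow P s) *v x = 0"
    then have fx: "gpow P s *v x = x" by (simp add: matrix_vector_mult_diff_rdistrib)
    have "(\<lambda>m. gpow P m *v x) \<longlonglongrightarrow> 0"
      using pow_tendsto0[OF sr2, of x] by (simp add: P_def Fi_def matpow_gpow)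
    moreover have "strict_mono (\<lambda>k. s * k)" using s by (intro strict_monoI) simp
    ultimately have "((\<lambda>m. gpow P m *v x) \<circ> (\<lambda>k. s * k)) \<longlonglongrightarrow> 0" by (rule LIMSEQ_subseq_LIMSEQ)
    moreover have "((\<lambda>m. gpow P m *v x) \<circ> (\<lambda>k. s * k)) = (\<lambda>k. x)"
      by (rule ext) (simp add: gpow_mult gpow_fix[OF fx])
    ultimately have "(\<lambda>k. x) \<longlonglongrightarrow> 0" by simp
    then show "x = 0" by (simp add: LIMSEQ_const_iff)
  qed
  have Uiinv: "invertible (matrix_inv U)"
    using matrix_inv_props[OF Uinv] unfolding invertible_def by blast
  have Rinv: "invertible R"
  proof -
    have "R = R ** (U ** matrix_inv U)" using matrix_inv_props[OF Uinv] by simp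
    also have "\<dots> = (fmat 1 - gpow P s) ** matrix_inv U" by (simp add: matrix_mul_assoc RU)
    finally have "R = (fmat 1 - gpow P s) ** matrix_inv U" .
    then show ?thesis using invertible_mult[OF M1inv Uiinv] by simp
  qed
  have Ain: "K_nonneg K (matrix_inv A)"
    by (rule inv_nonneg[OF K Ainv AUV Uinv Uin Vn sr1])
  have conv: "(\<lambda>k. gpow T k *v y) \<longlonglongrightarrow> 0" for y
    using wrs_main[OF K Ainv Ain Rinv Rn Bn, of y] unfolding Ceq .
  show "spectral_radius (two_stage_T F G V s) < 1 \<and>
           (\<forall>b x0. (\<lambda>k. two_stage_iter F G V s b x0 k) \<longlonglongrightarrow> matrix_inv A *v b)"
  proof (intro conjI allI)
    show "spectral_radius (two_stage_T F G V s) < 1"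
      unfolding T_def[symmetric] by (rule tendsto0_sr) (simp add: matpow_gpow conv)
  next
    fix b x0
    define xs where "xs = matrix_inv A *v b"
    have ceq: "two_stage_c F G s b = R *v b"
      unfolding two_stage_c_def R_def matrix_sum_vec matpow_gpow P_def Fi_def ..
    have fxs: "T *v xs + R *v b = xs"
    proof -
      have "T *v xs = xs - R *v (A *v xs)"
        by (simp add: Ceq[symmetric] matrix_vector_mult_diff_rdistrib matrix_vector_mul_assoc)
      moreover have "A *v xs = b" using matrix_inv_props[OF Ainv]
        by (simp add: xs_def matrix_vector_mul_assoc)
      ultimately show ?thesis by simp
    qed
    have it: "two_stage_iter F G V s b x0 k = xs + gpow T k *v (x0 - xs)" for k
    proof (induction k)
      case 0 then show ?case by (simp add: two_stage_iter_def)
    next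
      case (Suc k)
      have "two_stage_iter F G V s b x0 (Suc k) = T *v two_stage_iter F G V s b x0 k + R *v b"
        by (simp add: two_stage_iter_def T_def ceq)
      also have "\<dots> = (T *v xs + R *v b) + T *v (gpow T k *v (x0 - xs))"
        using Suc by (simp add: matrix_vector_right_distrib)
      also have "\<dots> = xs + gpow T (Suc k) *v (x0 - xs)"
        by (simp add: fxs gpow_Suc matrix_vector_mul_assoc)
      finally show ?case .
    qed
    have "(\<lambda>k. xs + gpow T k *v (x0 - xs)) \<longlonglongrightarrow> xs + 0"
      by (intro tendsto_add tendsto_const conv)
    then show "(\<lambda>k. two_stage_iter F G V s b x0 k) \<longlonglongrightarrow> matrix_inv A *v b"
      unfolding it xs_def by simp
  qed
qed

end
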